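(* Let $n\ge 2$ and let $\Sigma^n\subset\{x_{n+1}>0\}\subset\mathbb R^{n+1}$ be an immersed minimal hypersurface. Write $x=(z,x_n,x_{n+1})$ with $z=(x_1,\dots,x_{n-1})$, fix $s>0$, let $p'=(0,\dots,0,s,s)$, and define $f(x)=|x-p'|^2-\frac{n}{n-1}|z|^2$. Then $\Delta_\Sigma f\ge 0$ on $\Sigma$. If moreover $B_s\cap\Sigma\subset\{x_n>0\}$, where $B_s$ is the open ball of radius $s$ centered at the origin, then every point $x$ in the closure of $B_s\cap\Sigma$ with $|x|=s$ satisfies $$f(x)\le\Big(2-\frac{1}{n-1}\Big)s^2 .$$
   Context: $\Delta_\Sigma$ is the Laplace–Beltrami operator of $\Sigma$. *)

theory Defs
  imports "HOL-Analysis.Analysis"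
begin

definition pd :: "'k::finite \<Rightarrow> (real^'k \<Rightarrow> 'b::real_normed_vector) \<Rightarrow> real^'k \<Rightarrow> 'b" where
  "pd i h u = frechet_derivative h (at u) (axis i 1)"

fun pds :: "'k::finite list \<Rightarrow> (real^'k \<Rightarrow> 'b::real_normed_vector) \<Rightarrow> real^'k \<Rightarrow> 'b" where
  "pds [] h = h"
| "pds (i # is) h = pd i (pds is h)"

definition smooth_on :: "(real^'k::finite) set \<Rightarrow> (real^'k \<Rightarrow> 'b::real_normed_vector) \<Rightarrow> bool" where
  "smooth_on U h \<longleftrightarrow> (\<forall>is. pds is h differentiable_on U)"

definition metric :: "(real^'k::finite \<Rightarrow> real^'m::finite) \<Rightarrow> real^'k \<Rightarrow> real^'k^'k" where
  "metric \<phi> u = (\<chi> i j. pd i \<phi> u \<bullet> pd j \<phi> u)"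

definition inv_metric :: "(real^'k::finite \<Rightarrow> real^'m::finite) \<Rightarrow> real^'k \<Rightarrow> real^'k^'k" where
  "inv_metric \<phi> u = matrix_inv (metric \<phi> u)"

text \<open>A (local parametrization of an) immersed hypersurface piece: smooth map from open U with
  injective differential everywhere.\<close>
definition immersion_on :: "(real^'k::finite) set \<Rightarrow> (real^'k \<Rightarrow> real^'m::finite) \<Rightarrow> bool" where
  "immersion_on U \<phi> \<longleftrightarrow> open U \<and> smooth_on U \<phi> \<and> (\<forall>u\<in>U. inj (frechet_derivative \<phi> (at u)))"

definition tangent_proj :: "(real^'k::finite \<Rightarrow> real^'m::finite) \<Rightarrow> real^'k \<Rightarrow> real^'m \<Rightarrow> real^'m" where
  "tangent_proj \<phi> u v =
     (\<Sum>k\<in>UNIV. \<Sum>l\<in>UNIV. (inv_metric \<phi> u $ k $ l * (v \<bullet> pd k \<phi> u)) *\<^sub>R pd l \<phi> u)"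

definition mean_curvature_vec :: "(real^'k::finite \<Rightarrow> real^'m::finite) \<Rightarrow> real^'k \<Rightarrow> real^'m" where
  "mean_curvature_vec \<phi> u =
     (\<Sum>i\<in>UNIV. \<Sum>j\<in>UNIV. inv_metric \<phi> u $ i $ j *\<^sub>R
        (pd i (pd j \<phi>) u - tangent_proj \<phi> u (pd i (pd j \<phi>) u)))"

definition minimal_immersion_on :: "(real^'k::finite) set \<Rightarrow> (real^'k \<Rightarrow> real^'m::finite) \<Rightarrow> bool" where
  "minimal_immersion_on U \<phi> \<longleftrightarrow> immersion_on U \<phi> \<and> (\<forall>u\<in>U. mean_curvature_vec \<phi> u = 0)"

definition laplace_beltrami :: "(real^'k::finite \<Rightarrow> real^'m::finite) \<Rightarrow> (real^'k \<Rightarrow> real) \<Rightarrow> real^'k \<Rightarrow> real" where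
  "laplace_beltrami \<phi> h u =
     (1 / sqrt (det (metric \<phi> u))) *
     (\<Sum>i\<in>UNIV. pd i (\<lambda>v. sqrt (det (metric \<phi> v)) *
                          (\<Sum>j\<in>UNIV. inv_metric \<phi> v $ i $ j * pd j h v)) u)"

text \<open>The test function f(x) = |x - p'|^2 - n/(n-1) |z|^2, where coordinate a plays the role of
  x_n, coordinate b that of x_{n+1}, z collects the remaining n-1 coordinates, p' = s e_a + s e_b.\<close>
definition pprime :: "'m::finite \<Rightarrow> 'm \<Rightarrow> real \<Rightarrow> real^'m" where
  "pprime a b s = (\<chi> k. if k = a \<or> k = b then s else 0)"

definition ftest :: "nat \<Rightarrow> 'm::finite \<Rightarrow> 'm \<Rightarrow> real \<Rightarrow> real^'m \<Rightarrow> real" where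
  "ftest n a b s x = (norm (x - pprime a b s))\<^sup>2
      - real n / (real n - 1) * (\<Sum>k\<in>UNIV - {a, b}. (x $ k)\<^sup>2)"

end

theory Submission
  imports Defs
begin



lemma pd_eq: "(f has_derivative f') (at u) \<Longrightarrow> pd i f u = f' (axis i 1)"
  unfolding pd_def using frechet_derivative_at by metis

lemma pd_works: "f differentiable at u \<Longrightarrow> (f has_derivative frechet_derivative f (at u)) (at u)"
  using frechet_derivative_works by blast

lemma fd_axis: "frechet_derivative f (at u) (axis i 1) = pd i f u"
  by (simp add: pd_def)

lemma fd_expand:
  fixes f :: "real^'k::finite \<Rightarrow> 'b::real_normed_vector"
  assumes "f differentiable at u"
  shows "frechet_derivative f (at u) d = (\<Sum>j\<in>UNIV. (d$j) *\<^sub>R pd j f u)"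
proof -
  have lin: "linear (frechet_derivative f (at u))" using assms linear_frechet_derivative by blast
  have "d = (\<Sum>j\<in>UNIV. (d$j) *\<^sub>R axis j 1)"
    by (metis (no_types, lifting) basis_expansion scalar_mult_eq_scaleR sum.cong vector_smult_rzero)
  hence "frechet_derivative f (at u) d = frechet_derivative f (at u) (\<Sum>j\<in>UNIV. (d$j) *\<^sub>R axis j 1)" by simp
  also have "\<dots> = (\<Sum>j\<in>UNIV. (d$j) *\<^sub>R pd j f u)"
    using lin by (simp add: linear_sum linear_scale pd_def)
  finally show ?thesis .
qed




lemma line_deriv:
  fixes f :: "real^'k::finite \<Rightarrow> real^'m::finite"
  assumes "f differentiable at (y + s *\<^sub>R e)"
  shows "((\<lambda>t. w \<bullet> f (y + t *\<^sub>R e)) has_real_derivative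
           (w \<bullet> frechet_derivative f (at (y + s *\<^sub>R e)) e)) (at s)"
proof -
  let ?D = "frechet_derivative f (at (y + s *\<^sub>R e))"
  have lin: "linear ?D" using assms linear_frechet_derivative by blast
  have l: "((\<lambda>t. y + t *\<^sub>R e) has_derivative (\<lambda>t. t *\<^sub>R e)) (at s)"
    by (auto intro!: derivative_eq_intros)
  have fD: "(f has_derivative ?D) (at (y + s *\<^sub>R e))"
    using assms frechet_derivative_works by blast
  have c: "((\<lambda>t. f (y + t *\<^sub>R e)) has_derivative (\<lambda>t. ?D (t *\<^sub>R e))) (at s)"
    using diff_chain_at[OF l fD] by (simp add: o_def)
  have c2: "((\<lambda>t. w \<bullet> f (y + t *\<^sub>R e)) has_derivative (\<lambda>t. w \<bullet> ?D (t *\<^sub>R e))) (at s)"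
    by (rule has_derivative_inner_right[OF c])
  have eq: "(\<lambda>t. w \<bullet> ?D (t *\<^sub>R e)) = (\<lambda>t. (w \<bullet> ?D e) * t)"
    using lin by (auto simp: linear_scale)
  show ?thesis unfolding has_field_derivative_def using c2 eq by simp
qed

lemma double_mvt:
  fixes f g :: "real^'k::finite \<Rightarrow> real^'m::finite"
  assumes t: "t > 0"
    and box: "\<And>\<sigma> \<tau>. 0 \<le> \<sigma> \<Longrightarrow> \<sigma> \<le> t \<Longrightarrow> 0 \<le> \<tau> \<Longrightarrow> \<tau> \<le> t \<Longrightarrow> u + \<sigma> *\<^sub>R e1 + \<tau> *\<^sub>R e2 \<in> U"
    and d0: "\<forall>v\<in>U. f differentiable at v" and d1: "\<forall>v\<in>U. g differentiable at v"
    and gdef: "\<forall>v\<in>U. g v = frechet_derivative f (at v) e1"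
  shows "\<exists>\<sigma> \<tau>. 0\<le>\<sigma> \<and> \<sigma>\<le>t \<and> 0\<le>\<tau> \<and> \<tau>\<le>t \<and>
     w \<bullet> (f (u + t *\<^sub>R e1 + t *\<^sub>R e2) - f (u + t *\<^sub>R e1) - f (u + t *\<^sub>R e2) + f u)
       = t * t * (w \<bullet> frechet_derivative g (at (u + \<sigma> *\<^sub>R e1 + \<tau> *\<^sub>R e2)) e2)"
proof -
  define \<psi> where "\<psi> x = w \<bullet> f ((u + t *\<^sub>R e2) + x *\<^sub>R e1) - w \<bullet> f (u + x *\<^sub>R e1)" for x
  have pt: "(u + c *\<^sub>R e2) + x *\<^sub>R e1 = u + x *\<^sub>R e1 + c *\<^sub>R e2" for c x
    by (simp add: algebra_simps)
  have "DERIV \<psi> x :> (w \<bullet> g (u + x *\<^sub>R e1 + t *\<^sub>R e2) - w \<bullet> g (u + x *\<^sub>R e1))"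
    if "0 \<le> x" "x \<le> t" for x
  proof -
    have i1: "u + x *\<^sub>R e1 + t *\<^sub>R e2 \<in> U" and i2: "u + x *\<^sub>R e1 \<in> U"
      using box[of x t] box[of x 0] that t by auto
    have "DERIV (\<lambda>x. w \<bullet> f ((u + t *\<^sub>R e2) + x *\<^sub>R e1)) x :> w \<bullet> g (u + x *\<^sub>R e1 + t *\<^sub>R e2)"
      using line_deriv[of f "u + t *\<^sub>R e2" x e1 w] d0 i1 gdef unfolding pt by auto
    moreover have "DERIV (\<lambda>x. w \<bullet> f (u + x *\<^sub>R e1)) x :> w \<bullet> g (u + x *\<^sub>R e1)"
      using line_deriv[of f "u" x e1 w] d0 i2 gdef by auto
    ultimately show ?thesis unfolding \<psi>_def by (rule DERIV_diff)
  qed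
  from MVT2[OF t this] obtain \<sigma> where s: "0 < \<sigma>" "\<sigma> < t"
    and e1: "\<psi> t - \<psi> 0 = (t - 0) * (w \<bullet> g (u + \<sigma> *\<^sub>R e1 + t *\<^sub>R e2) - w \<bullet> g (u + \<sigma> *\<^sub>R e1))"
    by auto
  define chi where "chi y = w \<bullet> g ((u + \<sigma> *\<^sub>R e1) + y *\<^sub>R e2)" for y
  have "DERIV chi y :> (w \<bullet> frechet_derivative g (at (u + \<sigma> *\<^sub>R e1 + y *\<^sub>R e2)) e2)"
    if "0 \<le> y" "y \<le> t" for y
    unfolding chi_def using line_deriv[of g "u + \<sigma> *\<^sub>R e1" y e2 w] d1 box[of \<sigma> y] s that by auto
  from MVT2[OF t this] obtain \<tau> where tt: "0 < \<tau>" "\<tau> < t"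
    and e2: "chi t - chi 0 = (t - 0) * (w \<bullet> frechet_derivative g (at (u + \<sigma> *\<^sub>R e1 + \<tau> *\<^sub>R e2)) e2)"
    by auto
  have "w \<bullet> (f (u + t *\<^sub>R e1 + t *\<^sub>R e2) - f (u + t *\<^sub>R e1) - f (u + t *\<^sub>R e2) + f u) = \<psi> t - \<psi> 0"
    unfolding \<psi>_def by (simp add: algebra_simps inner_diff_right inner_add_right)
  also have "\<dots> = t * (chi t - chi 0)" unfolding e1 chi_def by (simp add: algebra_simps)
  also have "\<dots> = t * t * (w \<bullet> frechet_derivative g (at (u + \<sigma> *\<^sub>R e1 + \<tau> *\<^sub>R e2)) e2)"
    unfolding e2 by simp
  finally show ?thesis using s tt by (intro exI[of _ \<sigma>] exI[of _ \<tau>]) auto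
qed

lemma mixed_sym:
  fixes f :: "real^'k::finite \<Rightarrow> real^'m::finite"
  assumes U: "open U" "u \<in> U"
    and d0: "\<forall>v\<in>U. f differentiable at v"
    and di: "\<forall>v\<in>U. pd i f differentiable at v"
    and dj: "\<forall>v\<in>U. pd j f differentiable at v"
    and ci: "continuous_on U (pd j (pd i f))"
    and cj: "continuous_on U (pd i (pd j f))"
  shows "pd i (pd j f) u = pd j (pd i f) u"
proof (rule ccontr)
  assume ne: "pd i (pd j f) u \<noteq> pd j (pd i f) u"
  define w where "w = pd i (pd j f) u - pd j (pd i f) u"
  define A where "A v = w \<bullet> pd i (pd j f) v" for v
  define B where "B v = w \<bullet> pd j (pd i f) v" for v
  have wpos: "w \<bullet> w > 0" using ne unfolding w_def by simp
  have AB: "A u - B u = w \<bullet> w" unfolding A_def B_def w_def by (simp add: inner_diff_left inner_diff_right inner_commute)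
  let ?e = "w \<bullet> w / 2"
  have ep: "?e > 0" using wpos by simp
  have cA: "isCont A u" unfolding A_def using cj U continuous_on_eq_continuous_at
    by (auto intro!: continuous_intros)
  have cB: "isCont B u" unfolding B_def using ci U continuous_on_eq_continuous_at
    by (auto intro!: continuous_intros)
  obtain dA where dA: "dA > 0" "\<forall>x'. dist x' u < dA \<longrightarrow> dist (A x') (A u) < ?e"
    using cA ep unfolding continuous_at_eps_delta by blast
  obtain dB where dB: "dB > 0" "\<forall>x'. dist x' u < dB \<longrightarrow> dist (B x') (B u) < ?e"
    using cB ep unfolding continuous_at_eps_delta by blast
  obtain r0 where r0: "r0 > 0" "ball u r0 \<subseteq> U" using U openE by blast
  define r where "r = min r0 (min dA dB)"
  have r: "r > 0" "ball u r \<subseteq> U" "r \<le> dA" "r \<le> dB" using r0 dA dB unfolding r_def by auto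
  define t where "t = r / 4"
  have t: "t > 0" unfolding t_def using r by simp
  have inball: "dist (u + \<sigma> *\<^sub>R e1 + \<tau> *\<^sub>R e2) u < r"
    if "0 \<le> \<sigma>" "\<sigma> \<le> t" "0 \<le> \<tau>" "\<tau> \<le> t" "norm e1 = 1" "norm e2 = 1" for \<sigma> \<tau> and e1 e2 :: "real^'k"
  proof -
    have "dist (u + \<sigma> *\<^sub>R e1 + \<tau> *\<^sub>R e2) u = norm (\<sigma> *\<^sub>R e1 + \<tau> *\<^sub>R e2)"
      by (simp add: dist_norm)
    also have "\<dots> \<le> norm (\<sigma> *\<^sub>R e1) + norm (\<tau> *\<^sub>R e2)" by (rule norm_triangle_ineq)
    also have "\<dots> = \<sigma> + \<tau>" using that by simp
    also have "\<dots> < r" using that t_def r by simp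
    finally show ?thesis .
  qed
  let ?e1 = "axis i 1 :: real^'k" and ?e2 = "axis j 1 :: real^'k"
  have n1: "norm ?e1 = 1" "norm ?e2 = 1" by simp_all
  have box1: "u + \<sigma> *\<^sub>R ?e1 + \<tau> *\<^sub>R ?e2 \<in> U"
    if "0 \<le> \<sigma>" "\<sigma> \<le> t" "0 \<le> \<tau>" "\<tau> \<le> t" for \<sigma> \<tau>
    using inball[OF that n1] r(2) by (auto simp: dist_commute)
  have box2: "u + \<sigma> *\<^sub>R ?e2 + \<tau> *\<^sub>R ?e1 \<in> U"
    if "0 \<le> \<sigma>" "\<sigma> \<le> t" "0 \<le> \<tau>" "\<tau> \<le> t" for \<sigma> \<tau>
    using inball[OF that n1(2) n1(1)] r(2) by (auto simp: dist_commute)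
  obtain \<sigma> \<tau> where st: "0\<le>\<sigma>" "\<sigma>\<le>t" "0\<le>\<tau>" "\<tau>\<le>t" and
    m1: "w \<bullet> (f (u + t *\<^sub>R ?e1 + t *\<^sub>R ?e2) - f (u + t *\<^sub>R ?e1) - f (u + t *\<^sub>R ?e2) + f u)
       = t * t * (w \<bullet> frechet_derivative (pd i f) (at (u + \<sigma> *\<^sub>R ?e1 + \<tau> *\<^sub>R ?e2)) ?e2)"
    using double_mvt[OF t box1 d0 di, of w] by (auto simp: pd_def)
  obtain \<sigma>' \<tau>' where st': "0\<le>\<sigma>'" "\<sigma>'\<le>t" "0\<le>\<tau>'" "\<tau>'\<le>t" and
    m2: "w \<bullet> (f (u + t *\<^sub>R ?e2 + t *\<^sub>R ?e1) - f (u + t *\<^sub>R ?e2) - f (u + t *\<^sub>R ?e1) + f u)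
       = t * t * (w \<bullet> frechet_derivative (pd j f) (at (u + \<sigma>' *\<^sub>R ?e2 + \<tau>' *\<^sub>R ?e1)) ?e1)"
    using double_mvt[OF t box2 d0 dj, of w] by (auto simp: pd_def)
  have comm: "u + t *\<^sub>R ?e2 + t *\<^sub>R ?e1 = u + t *\<^sub>R ?e1 + t *\<^sub>R ?e2" by (simp add: algebra_simps)
  have "t * t * B (u + \<sigma> *\<^sub>R ?e1 + \<tau> *\<^sub>R ?e2) = t * t * A (u + \<sigma>' *\<^sub>R ?e2 + \<tau>' *\<^sub>R ?e1)"
    using m1 m2 unfolding comm A_def B_def pd_def by (simp add: algebra_simps)
  hence eqAB: "B (u + \<sigma> *\<^sub>R ?e1 + \<tau> *\<^sub>R ?e2) = A (u + \<sigma>' *\<^sub>R ?e2 + \<tau>' *\<^sub>R ?e1)" using t by simp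
  have "dist (B (u + \<sigma> *\<^sub>R ?e1 + \<tau> *\<^sub>R ?e2)) (B u) < ?e"
    using dB(2) inball[OF st n1] r by auto
  moreover have "dist (A (u + \<sigma>' *\<^sub>R ?e2 + \<tau>' *\<^sub>R ?e1)) (A u) < ?e"
    using dA(2) inball[OF st' n1(2) n1(1)] r by auto
  ultimately show False using eqAB AB unfolding dist_real_def by linarith
qed




lemma det_has_derivative:
  fixes M :: "real^'k::finite \<Rightarrow> real^'n::finite^'n"
  assumes "\<And>r c. ((\<lambda>v. M v $ r $ c) has_derivative M' r c) (at u)"
  shows "((\<lambda>v. det (M v)) has_derivative (\<lambda>d. \<Sum>p\<in>{p. p permutes (UNIV::'n set)}. of_int (sign p) *
      (\<Sum>i\<in>UNIV. M' i (p i) d * (\<Prod>j\<in>UNIV-{i}. M u $ j $ p j)))) (at u)"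
  unfolding det_def
  by (intro has_derivative_sum has_derivative_mult_right has_derivative_prod assms)

lemma invertible_inv:
  fixes A :: "real^'n::finite^'n"
  assumes "invertible A"
  shows "A ** matrix_inv A = mat 1" "matrix_inv A ** A = mat 1"
proof -
  have "\<exists>A'. A ** A' = mat 1 \<and> A' ** A = mat 1" using assms unfolding invertible_def by blast
  hence "A ** matrix_inv A = mat 1 \<and> matrix_inv A ** A = mat 1"
    unfolding matrix_inv_def by (rule someI_ex)
  thus "A ** matrix_inv A = mat 1" "matrix_inv A ** A = mat 1" by auto
qed

lemma jacobi_alg:
  fixes A B :: "real^'n::finite^'n"
  assumes inv: "invertible A"
  shows "(\<Sum>p\<in>{p. p permutes (UNIV::'n set)}. of_int (sign p) *
      (\<Sum>i\<in>UNIV. B $ i $ (p i) * (\<Prod>j\<in>UNIV-{i}. A $ j $ p j)))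
    = det A * (\<Sum>i\<in>UNIV. \<Sum>b\<in>UNIV. B $ i $ b * matrix_inv A $ b $ i)"
proof -
  let ?G = "matrix_inv A"
  have step1: "det (\<chi> r. if r = i then row i B else row r A) =
      (\<Sum>p\<in>{p. p permutes (UNIV::'n set)}. of_int (sign p) * (B $ i $ (p i) * (\<Prod>j\<in>UNIV-{i}. A $ j $ p j)))" for i
    unfolding det_def
  proof (rule sum.cong[OF refl])
    fix p assume "p \<in> {p. p permutes (UNIV::'n set)}"
    have "(\<Prod>r\<in>UNIV. (\<chi> r. if r = i then row i B else row r A) $ r $ p r)
        = (\<chi> r. if r = i then row i B else row r A) $ i $ p i *
          (\<Prod>r\<in>UNIV-{i}. (\<chi> r. if r = i then row i B else row r A) $ r $ p r)"
      by (rule prod.remove) auto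
    also have "\<dots> = B $ i $ (p i) * (\<Prod>j\<in>UNIV-{i}. A $ j $ p j)"
      by (auto simp add: row_def intro!: prod.cong)
    finally show "of_int (sign p) * (\<Prod>r\<in>UNIV. (\<chi> r. if r = i then row i B else row r A) $ r $ p r)
        = of_int (sign p) * (B $ i $ (p i) * (\<Prod>j\<in>UNIV-{i}. A $ j $ p j))" by simp
  qed
  have rowB: "row i B = (\<Sum>a\<in>UNIV. (\<Sum>b\<in>UNIV. B $ i $ b * ?G $ b $ a) *s row a A)" for i
  proof -
    have GA: "?G ** A = mat 1" using invertible_inv[OF inv] by simp
    have "(\<Sum>a\<in>UNIV. (\<Sum>b\<in>UNIV. B $ i $ b * ?G $ b $ a) * A $ a $ x) = B $ i $ x" for x
    proof -
      have "(\<Sum>a\<in>UNIV. (\<Sum>b\<in>UNIV. B $ i $ b * ?G $ b $ a) * A $ a $ x)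
          = (\<Sum>b\<in>UNIV. B $ i $ b * (\<Sum>a\<in>UNIV. ?G $ b $ a * A $ a $ x))"
        unfolding sum_distrib_left sum_distrib_right mult.assoc by (rule sum.swap)
      also have "\<dots> = (\<Sum>b\<in>UNIV. B $ i $ b * (mat 1 :: real^'n^'n) $ b $ x)"
      proof -
        have "(\<Sum>a\<in>UNIV. ?G $ b $ a * A $ a $ x) = (?G ** A) $ b $ x" for b
          by (simp add: matrix_matrix_mult_def)
        thus ?thesis unfolding GA by simp
      qed
      also have "\<dots> = B $ i $ x" by (simp add: mat_def if_distrib cong: if_cong)
      finally show ?thesis .
    qed
    thus ?thesis by (simp add: vec_eq_iff row_def sum_component)
  qed
  have step2: "det (\<chi> r. if r = i then row i B else row r A) = (\<Sum>b\<in>UNIV. B $ i $ b * ?G $ b $ i) * det A" for i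
    unfolding rowB[of i] using cramer_lemma_transpose[of i "\<chi> a. \<Sum>b\<in>UNIV. B $ i $ b * ?G $ b $ a" A]
    by (simp only: vec_lambda_beta)
  have "(\<Sum>p\<in>{p. p permutes (UNIV::'n set)}. of_int (sign p) *
      (\<Sum>i\<in>UNIV. B $ i $ (p i) * (\<Prod>j\<in>UNIV-{i}. A $ j $ p j)))
     = (\<Sum>i\<in>UNIV. \<Sum>p\<in>{p. p permutes (UNIV::'n set)}. of_int (sign p) * (B $ i $ (p i) * (\<Prod>j\<in>UNIV-{i}. A $ j $ p j)))"
    unfolding sum_distrib_left by (rule sum.swap)
  also have "\<dots> = (\<Sum>i\<in>UNIV. det (\<chi> r. if r = i then row i B else row r A))" by (simp add: step1)
  also have "\<dots> = det A * (\<Sum>i\<in>UNIV. \<Sum>b\<in>UNIV. B $ i $ b * ?G $ b $ i)"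
    by (simp add: step2 sum_distrib_left sum_distrib_right mult.commute)
  finally show ?thesis .
qed




lemma sum3_rot:
  "(\<Sum>i\<in>A. \<Sum>a\<in>B. \<Sum>b\<in>C. f i a b) = (\<Sum>b\<in>C. \<Sum>i\<in>A. \<Sum>a\<in>B. (f i a b :: real))"
proof -
  have "(\<Sum>i\<in>A. \<Sum>a\<in>B. \<Sum>b\<in>C. f i a b) = (\<Sum>i\<in>A. \<Sum>b\<in>C. \<Sum>a\<in>B. f i a b)"
    by (rule sum.cong[OF refl], rule sum.swap)
  also have "\<dots> = (\<Sum>b\<in>C. \<Sum>i\<in>A. \<Sum>a\<in>B. f i a b)" by (rule sum.swap)
  finally show ?thesis .
qed

lemma sum4_rot:
  "(\<Sum>i\<in>A. \<Sum>a\<in>B. \<Sum>b\<in>C. \<Sum>l\<in>D. f i a b l) = (\<Sum>l\<in>D. \<Sum>i\<in>A. \<Sum>a\<in>B. \<Sum>b\<in>C. (f i a b l :: real))"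
proof -
  have "(\<Sum>i\<in>A. \<Sum>a\<in>B. \<Sum>b\<in>C. \<Sum>l\<in>D. f i a b l) = (\<Sum>i\<in>A. \<Sum>l\<in>D. \<Sum>a\<in>B. \<Sum>b\<in>C. f i a b l)"
    by (rule sum.cong[OF refl], rule sum3_rot)
  also have "\<dots> = (\<Sum>l\<in>D. \<Sum>i\<in>A. \<Sum>a\<in>B. \<Sum>b\<in>C. f i a b l)" by (rule sum.swap)
  finally show ?thesis .
qed

lemma core_alg:
  fixes P :: "'k::finite \<Rightarrow> real^'m::finite" and Q :: "'k \<Rightarrow> 'k \<Rightarrow> real^'m"
    and G :: "real^'k^'k" and w :: "'k \<Rightarrow> real"
  assumes Qs: "\<And>i j. Q i j = Q j i" and Gs: "\<And>i j. G$i$j = G$j$i"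
  shows "(\<Sum>i\<in>UNIV. (1/2) * (\<Sum>a\<in>UNIV. \<Sum>b\<in>UNIV. (Q i a \<bullet> P b + P a \<bullet> Q i b) * G$b$a) * (\<Sum>l\<in>UNIV. G$i$l * w l)
        + (\<Sum>l\<in>UNIV. (- (\<Sum>a\<in>UNIV. \<Sum>b\<in>UNIV. G$i$a * (Q i a \<bullet> P b + P a \<bullet> Q i b) * G$b$l)) * w l))
   = - (\<Sum>i\<in>UNIV. \<Sum>j\<in>UNIV. G$i$j * (\<Sum>k\<in>UNIV. \<Sum>l\<in>UNIV. G$k$l * ((Q i j \<bullet> P k) * w l)))"
proof -
  define C1 where "C1 l = (\<Sum>i\<in>UNIV. \<Sum>a\<in>UNIV. \<Sum>b\<in>UNIV. (Q i a \<bullet> P b) * G$b$a * G$i$l)" for l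
  define C2 where "C2 l = (\<Sum>i\<in>UNIV. \<Sum>a\<in>UNIV. \<Sum>b\<in>UNIV. G$i$a * (Q i a \<bullet> P b) * G$b$l)" for l
  define C3 where "C3 l = (\<Sum>i\<in>UNIV. \<Sum>a\<in>UNIV. \<Sum>b\<in>UNIV. G$i$a * (P a \<bullet> Q i b) * G$b$l)" for l
  have sym: "(\<Sum>a\<in>UNIV. \<Sum>b\<in>UNIV. (P a \<bullet> Q i b) * G$b$a) = (\<Sum>a\<in>UNIV. \<Sum>b\<in>UNIV. (Q i a \<bullet> P b) * G$b$a)" for i
  proof -
    have "(\<Sum>a\<in>UNIV. \<Sum>b\<in>UNIV. (P a \<bullet> Q i b) * G$b$a) = (\<Sum>b\<in>UNIV. \<Sum>a\<in>UNIV. (P a \<bullet> Q i b) * G$b$a)"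
      by (rule sum.swap)
    also have "\<dots> = (\<Sum>b\<in>UNIV. \<Sum>a\<in>UNIV. (Q i b \<bullet> P a) * G$a$b)"
      by (simp add: inner_commute Gs)
    finally show ?thesis .
  qed
  have half: "(1/2) * (\<Sum>a\<in>UNIV. \<Sum>b\<in>UNIV. (Q i a \<bullet> P b + P a \<bullet> Q i b) * G$b$a)
      = (\<Sum>a\<in>UNIV. \<Sum>b\<in>UNIV. (Q i a \<bullet> P b) * G$b$a)" for i
  proof -
    have "(\<Sum>a\<in>UNIV. \<Sum>b\<in>UNIV. (Q i a \<bullet> P b + P a \<bullet> Q i b) * G$b$a)
      = (\<Sum>a\<in>UNIV. \<Sum>b\<in>UNIV. (Q i a \<bullet> P b) * G$b$a) + (\<Sum>a\<in>UNIV. \<Sum>b\<in>UNIV. (P a \<bullet> Q i b) * G$b$a)"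
      by (simp add: distrib_right sum.distrib)
    thus ?thesis using sym[of i] by simp
  qed
  have A: "(\<Sum>i\<in>UNIV. (\<Sum>a\<in>UNIV. \<Sum>b\<in>UNIV. (Q i a \<bullet> P b) * G$b$a) * (\<Sum>l\<in>UNIV. G$i$l * w l))
      = (\<Sum>l\<in>UNIV. C1 l * w l)"
  proof -
    have "(\<Sum>i\<in>UNIV. (\<Sum>a\<in>UNIV. \<Sum>b\<in>UNIV. (Q i a \<bullet> P b) * G$b$a) * (\<Sum>l\<in>UNIV. G$i$l * w l))
       = (\<Sum>i\<in>UNIV. \<Sum>l\<in>UNIV. (\<Sum>a\<in>UNIV. \<Sum>b\<in>UNIV. (Q i a \<bullet> P b) * G$b$a * G$i$l) * w l)"
      by (rule sum.cong[OF refl]) (simp add: sum_distrib_left sum_distrib_right mult.assoc)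
    also have "\<dots> = (\<Sum>l\<in>UNIV. \<Sum>i\<in>UNIV. (\<Sum>a\<in>UNIV. \<Sum>b\<in>UNIV. (Q i a \<bullet> P b) * G$b$a * G$i$l) * w l)"
      by (rule sum.swap)
    also have "\<dots> = (\<Sum>l\<in>UNIV. C1 l * w l)"
      unfolding C1_def by (simp add: sum_distrib_right)
    finally show ?thesis .
  qed
  have B: "(\<Sum>i\<in>UNIV. \<Sum>l\<in>UNIV. (- (\<Sum>a\<in>UNIV. \<Sum>b\<in>UNIV. G$i$a * (Q i a \<bullet> P b + P a \<bullet> Q i b) * G$b$l)) * w l)
     = (\<Sum>l\<in>UNIV. (- C2 l - C3 l) * w l)"
  proof -
    have "(\<Sum>i\<in>UNIV. \<Sum>l\<in>UNIV. (- (\<Sum>a\<in>UNIV. \<Sum>b\<in>UNIV. G$i$a * (Q i a \<bullet> P b + P a \<bullet> Q i b) * G$b$l)) * w l)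
      = (\<Sum>l\<in>UNIV. \<Sum>i\<in>UNIV. (- (\<Sum>a\<in>UNIV. \<Sum>b\<in>UNIV. G$i$a * (Q i a \<bullet> P b + P a \<bullet> Q i b) * G$b$l)) * w l)"
      by (rule sum.swap)
    also have "\<dots> = (\<Sum>l\<in>UNIV. (- C2 l - C3 l) * w l)"
      unfolding C2_def C3_def
      by (rule sum.cong[OF refl]) (simp add: sum_distrib_right sum.distrib distrib_left distrib_right sum_negf,
          simp only: sum_distrib_right[symmetric] sum_subtractf sum_negf)
    finally show ?thesis .
  qed
  have C13: "C3 l = C1 l" for l
  proof -
    have "C3 l = (\<Sum>i\<in>UNIV. \<Sum>a\<in>UNIV. \<Sum>b\<in>UNIV. (Q b i \<bullet> P a) * G$a$i * G$b$l)"
      unfolding C3_def by (simp add: Gs Qs inner_commute mult.commute mult.left_commute)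
    also have "\<dots> = C1 l" unfolding C1_def by (rule sum3_rot)
    finally show ?thesis .
  qed
  have RHS: "(\<Sum>i\<in>UNIV. \<Sum>j\<in>UNIV. G$i$j * (\<Sum>k\<in>UNIV. \<Sum>l\<in>UNIV. G$k$l * ((Q i j \<bullet> P k) * w l)))
     = (\<Sum>l\<in>UNIV. C2 l * w l)"
  proof -
    have "(\<Sum>i\<in>UNIV. \<Sum>j\<in>UNIV. G$i$j * (\<Sum>k\<in>UNIV. \<Sum>l\<in>UNIV. G$k$l * ((Q i j \<bullet> P k) * w l)))
      = (\<Sum>i\<in>UNIV. \<Sum>j\<in>UNIV. \<Sum>k\<in>UNIV. \<Sum>l\<in>UNIV. G$i$j * (Q i j \<bullet> P k) * G$k$l * w l)"
      by (simp add: sum_distrib_left mult.assoc mult.left_commute)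
    also have "\<dots> = (\<Sum>l\<in>UNIV. \<Sum>i\<in>UNIV. \<Sum>j\<in>UNIV. \<Sum>k\<in>UNIV. G$i$j * (Q i j \<bullet> P k) * G$k$l * w l)"
      by (rule sum4_rot)
    also have "\<dots> = (\<Sum>l\<in>UNIV. C2 l * w l)"
      unfolding C2_def by (simp add: sum_distrib_right)
    finally show ?thesis .
  qed
  have "(\<Sum>i\<in>UNIV. (1/2) * (\<Sum>a\<in>UNIV. \<Sum>b\<in>UNIV. (Q i a \<bullet> P b + P a \<bullet> Q i b) * G$b$a) * (\<Sum>l\<in>UNIV. G$i$l * w l)
        + (\<Sum>l\<in>UNIV. (- (\<Sum>a\<in>UNIV. \<Sum>b\<in>UNIV. G$i$a * (Q i a \<bullet> P b + P a \<bullet> Q i b) * G$b$l)) * w l))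
      = (\<Sum>i\<in>UNIV. (\<Sum>a\<in>UNIV. \<Sum>b\<in>UNIV. (Q i a \<bullet> P b) * G$b$a) * (\<Sum>l\<in>UNIV. G$i$l * w l))
        + (\<Sum>i\<in>UNIV. \<Sum>l\<in>UNIV. (- (\<Sum>a\<in>UNIV. \<Sum>b\<in>UNIV. G$i$a * (Q i a \<bullet> P b + P a \<bullet> Q i b) * G$b$l)) * w l)"
    by (simp only: half sum.distrib)
  also have "\<dots> = (\<Sum>l\<in>UNIV. C1 l * w l) + (\<Sum>l\<in>UNIV. (- C2 l - C3 l) * w l)" by (simp only: A B)
  also have "\<dots> = - (\<Sum>l\<in>UNIV. C2 l * w l)"
    by (simp add: C13 sum.distrib[symmetric] algebra_simps sum_negf[symmetric])
  finally show ?thesis using RHS by simp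
qed



lemma proj_diag_le1:
  fixes P :: "'k::finite \<Rightarrow> real^'m::finite" and G :: "real^'k^'k"
  assumes GI: "\<And>j l. (\<Sum>i\<in>UNIV. G$j$i * (P i \<bullet> P l)) = (if j = l then 1 else 0)"
    and Gs: "\<And>i j. G$i$j = G$j$i"
  shows "(\<Sum>i\<in>UNIV. \<Sum>j\<in>UNIV. G$i$j * (P i $ k * P j $ k)) \<le> 1"
proof -
  define \<pi> where "\<pi> = (\<Sum>i\<in>UNIV. \<Sum>j\<in>UNIV. G$i$j * (P i $ k * P j $ k))"
  define wv where "wv = (\<Sum>i\<in>UNIV. \<Sum>j\<in>UNIV. (G$i$j * P j $ k) *\<^sub>R P i)"
  have wP: "wv \<bullet> P l = P l $ k" for l
  proof -
    have "wv \<bullet> P l = (\<Sum>i\<in>UNIV. \<Sum>j\<in>UNIV. G$i$j * P j $ k * (P i \<bullet> P l))"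
      unfolding wv_def by (simp add: inner_sum_left)
    also have "\<dots> = (\<Sum>j\<in>UNIV. \<Sum>i\<in>UNIV. G$i$j * P j $ k * (P i \<bullet> P l))" by (rule sum.swap)
    also have "\<dots> = (\<Sum>j\<in>UNIV. P j $ k * (\<Sum>i\<in>UNIV. G$j$i * (P i \<bullet> P l)))"
      by (simp add: sum_distrib_left Gs mult_ac)
    also have "\<dots> = P l $ k" by (simp add: GI if_distrib cong: if_cong)
    finally show ?thesis .
  qed
  have wk: "wv $ k = \<pi>"
    unfolding wv_def \<pi>_def by (simp add: sum_component mult_ac)
  have ww: "wv \<bullet> wv = \<pi>"
  proof -
    have "wv \<bullet> wv = (\<Sum>i\<in>UNIV. \<Sum>j\<in>UNIV. G$i$j * P j $ k * (P i \<bullet> wv))"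
      unfolding wv_def[of] by (simp add: inner_sum_left)
    also have "\<dots> = \<pi>" unfolding \<pi>_def by (simp add: inner_commute[of _ wv] wP mult_ac)
    finally show ?thesis .
  qed
  have "0 \<le> (axis k (1::real) - wv) \<bullet> (axis k (1::real) - wv)" by simp
  also have "\<dots> = 1 - 2 * wv $ k + wv \<bullet> wv"
  proof -
    have aa: "axis k (1::real) \<bullet> axis k (1::real) = (1::real)" by (simp add: inner_axis_axis)
    have "(axis k (1::real) - wv) \<bullet> (axis k (1::real) - wv) = axis k (1::real) \<bullet> axis k (1::real) - 2 * (wv \<bullet> axis k (1::real)) + wv \<bullet> wv"
      by (simp add: inner_diff_left inner_diff_right inner_commute[of wv "axis k (1::real)"])
    thus ?thesis unfolding aa inner_axis by simp
  qed
  finally show ?thesis using wk ww \<pi>_def by simp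
qed

lemma nonneg_alg:
  fixes P :: "'k::finite \<Rightarrow> real^'m::finite" and G :: "real^'k^'k" and Zs :: "'m set"
  assumes GI: "\<And>j l. (\<Sum>i\<in>UNIV. G$j$i * (P i \<bullet> P l)) = (if j = l then 1 else 0)"
    and Gs: "\<And>i j. G$i$j = G$j$i"
    and cardZ: "card Zs + 1 = CARD('k)"
  shows "0 \<le> (\<Sum>i\<in>UNIV. \<Sum>j\<in>UNIV. G$i$j *
     ((2 *\<^sub>R P i - (2 * (real CARD('k) / (real CARD('k) - 1))) *\<^sub>R (\<chi> k. if k \<in> Zs then P i $ k else 0)) \<bullet> P j))"
proof -
  let ?n = "real CARD('k)"
  let ?c = "?n / (?n - 1)"
  have nge: "?n - 1 = real (card Zs)" using cardZ by (simp add: of_nat_diff flip: cardZ)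
  have T1: "(\<Sum>i\<in>UNIV. \<Sum>j\<in>UNIV. G$i$j * (P i \<bullet> P j)) = ?n"
  proof -
    have "(\<Sum>i\<in>UNIV. \<Sum>j\<in>UNIV. G$i$j * (P i \<bullet> P j)) = (\<Sum>j\<in>UNIV. \<Sum>i\<in>UNIV. G$j$i * (P i \<bullet> P j))"
      by (subst sum.swap) (simp add: Gs)
    also have "\<dots> = (\<Sum>j\<in>(UNIV::'k set). 1)" by (simp add: GI)
    finally show ?thesis by simp
  qed
  have T2: "(\<Sum>i\<in>UNIV. \<Sum>j\<in>UNIV. G$i$j * ((\<chi> k. if k \<in> Zs then P i $ k else 0) \<bullet> P j))
      = (\<Sum>k\<in>Zs. \<Sum>i\<in>UNIV. \<Sum>j\<in>UNIV. G$i$j * (P i $ k * P j $ k))"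
  proof -
    have ip: "(\<chi> k. if k \<in> Zs then P i $ k else 0) \<bullet> P j = (\<Sum>k\<in>Zs. P i $ k * P j $ k)" for i j
    proof -
      have "(\<chi> k. if k \<in> Zs then P i $ k else 0) \<bullet> P j = (\<Sum>k\<in>UNIV. if k \<in> Zs then P i $ k * P j $ k else 0)"
        unfolding inner_vec_def by (rule sum.cong) auto
      also have "\<dots> = (\<Sum>k\<in>Zs. P i $ k * P j $ k)"
        by (simp add: sum.If_cases)
      finally show ?thesis .
    qed
    show ?thesis unfolding ip
      by (simp add: sum_distrib_left sum.swap[of _ Zs])
  qed
  have T3: "(\<Sum>k\<in>Zs. \<Sum>i\<in>UNIV. \<Sum>j\<in>UNIV. G$i$j * (P i $ k * P j $ k)) \<le> real (card Zs)"
  proof -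
    have "(\<Sum>k\<in>Zs. \<Sum>i\<in>UNIV. \<Sum>j\<in>UNIV. G$i$j * (P i $ k * P j $ k)) \<le> (\<Sum>k\<in>Zs. (1::real))"
      by (rule sum_mono) (rule proj_diag_le1[OF GI Gs])
    thus ?thesis by simp
  qed
  have "(\<Sum>i\<in>UNIV. \<Sum>j\<in>UNIV. G$i$j *
     ((2 *\<^sub>R P i - (2 * ?c) *\<^sub>R (\<chi> k. if k \<in> Zs then P i $ k else 0)) \<bullet> P j))
     = 2 * (\<Sum>i\<in>UNIV. \<Sum>j\<in>UNIV. G$i$j * (P i \<bullet> P j))
       - 2 * ?c * (\<Sum>i\<in>UNIV. \<Sum>j\<in>UNIV. G$i$j * ((\<chi> k. if k \<in> Zs then P i $ k else 0) \<bullet> P j))"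
    by (simp add: inner_diff_left sum_subtractf sum_distrib_left algebra_simps)
  also have "\<dots> \<ge> 0"
  proof -
    let ?S = "(\<Sum>k\<in>Zs. \<Sum>i\<in>UNIV. \<Sum>j\<in>UNIV. G$i$j * (P i $ k * P j $ k))"
    have c0: "?c \<ge> 0" using nge by simp
    have "2 * ?c * ?S \<le> 2 * ?c * real (card Zs)" using T3 c0 by (intro mult_left_mono) auto
    moreover have "2 * ?c * real (card Zs) \<le> 2 * ?n"
    proof (cases "card Zs = 0")
      case True thus ?thesis by simp
    next
      case False thus ?thesis using nge by (simp flip: nge)
    qed
    ultimately show ?thesis unfolding T1 T2 by linarith
  qed
  finally show ?thesis by simp
qed


lemma metric_invertible:
  fixes \<phi> :: "real^'k::finite \<Rightarrow> real^'m::finite"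
  assumes d: "\<phi> differentiable at v" and inj: "inj (frechet_derivative \<phi> (at v))"
  shows "invertible (metric \<phi> v)"
proof -
  let ?M = "metric \<phi> v"
  let ?D = "frechet_derivative \<phi> (at v)"
  have lin: "linear ?D" using d linear_frechet_derivative by blast
  have "x = 0" if "?M *v x = 0" for x
  proof -
    have mv: "(?M *v x) $ i = (\<Sum>j\<in>UNIV. x$j * (pd i \<phi> v \<bullet> pd j \<phi> v))" for i
      by (simp add: matrix_vector_mult_def metric_def mult.commute)
    have "x \<bullet> (?M *v x) = (\<Sum>i\<in>UNIV. x$i * (?M *v x) $ i)"
      by (simp only: inner_vec_def inner_real_def)
    also have "\<dots> = (\<Sum>i\<in>UNIV. \<Sum>j\<in>UNIV. x$i * x$j * (pd i \<phi> v \<bullet> pd j \<phi> v))"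
      unfolding mv by (simp add: sum_distrib_left mult.assoc)
    also have "\<dots> = ?D x \<bullet> ?D x"
      unfolding fd_expand[OF d] by (simp add: inner_sum_left inner_sum_right sum_distrib_left mult.assoc)
        (subst sum.swap, simp add: mult_ac)
    finally have "?D x \<bullet> ?D x = 0" using that by simp
    hence "?D x = 0" by simp
    hence "?D x = ?D 0" using lin linear_0 by metis
    thus "x = 0" using inj by (meson injD)
  qed
  hence "\<exists>B. B ** ?M = mat 1" using matrix_left_invertible_ker by blast
  then obtain B where "B ** ?M = mat 1" by blast
  thus ?thesis unfolding invertible_def using matrix_left_right_inverse by blast
qed

lemma metric_sym: "metric \<phi> v $ i $ j = metric \<phi> v $ j $ i"
  by (simp add: metric_def inner_commute)

lemma inv_sym:
  fixes A :: "real^'n::finite^'n"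
  assumes inv: "invertible A" and sym: "\<And>i j. A$i$j = A$j$i"
  shows "matrix_inv A $ i $ j = matrix_inv A $ j $ i"
proof -
  let ?G = "matrix_inv A"
  have At: "transpose A = A" using sym by (simp add: vec_eq_iff transpose_def)
  have "transpose ?G ** A = mat 1"
    using invertible_inv(1)[OF inv] by (metis At matrix_transpose_mul transpose_mat)
  hence "transpose ?G = transpose ?G ** (A ** ?G)" using invertible_inv(1)[OF inv] by simp
  also have "\<dots> = ?G" using \<open>transpose ?G ** A = mat 1\<close> by (simp add: matrix_mul_assoc)
  finally have "transpose ?G = ?G" .
  thus ?thesis by (metis transpose_def vec_lambda_beta)
qed

lemma sqrt_has_derivative:
  assumes "(f has_derivative f') (at u)" "f u \<noteq> (0::real)"
  shows "((\<lambda>v. sqrt (f v)) has_derivative (\<lambda>d. sqrt (f u) / (2 * f u) * f' d)) (at u)"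
proof -
  have "DERIV sqrt (f u) :> sqrt (f u) / (2 * f u)"
  proof (rule DERIV_real_sqrt_generic)
    show "f u \<noteq> 0" by fact
    show "0 < f u \<Longrightarrow> sqrt (f u) / (2 * f u) = inverse (sqrt (f u)) / 2"
      by (simp add: field_simps)
    show "f u < 0 \<Longrightarrow> sqrt (f u) / (2 * f u) = - inverse (sqrt (f u)) / 2"
      using real_sqrt_mult_self[of "f u"]
      by (simp add: field_simps real_sqrt_minus)
  qed
  hence "(sqrt has_derivative (\<lambda>x. x * (sqrt (f u) / (2 * f u)))) (at (f u))"
    unfolding has_field_derivative_def by (rule has_derivative_eq_rhs) (auto simp: fun_eq_iff)
  from diff_chain_at[OF assms(1) this] show ?thesis
    by (simp add: o_def mult.commute)
qed




definition Zv :: "'m::finite set \<Rightarrow> real^'m \<Rightarrow> real^'m" where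
  "Zv Zs x = (\<chi> k. if k \<in> Zs then x$k else 0)"

definition Wf :: "nat \<Rightarrow> 'm::finite \<Rightarrow> 'm \<Rightarrow> real \<Rightarrow> real^'m \<Rightarrow> real^'m" where
  "Wf n a b s x = 2 *\<^sub>R (x - pprime a b s) - (2 * (real n / (real n - 1))) *\<^sub>R Zv (UNIV - {a, b}) x"

lemma Zv_linear: "linear (Zv Zs)"
  by (rule linearI) (auto simp: Zv_def vec_eq_iff)

lemma Zv_bl: "bounded_linear (Zv Zs)"
  using Zv_linear linear_conv_bounded_linear by blast

lemma Zv_inner: "Zv Zs x \<bullet> y = (\<Sum>k\<in>Zs. x $ k * y $ k)"
proof -
  have "Zv Zs x \<bullet> y = (\<Sum>k\<in>UNIV. if k \<in> Zs then x $ k * y $ k else 0)"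
    unfolding inner_vec_def Zv_def by (rule sum.cong) auto
  also have "\<dots> = (\<Sum>k\<in>Zs. x $ k * y $ k)" by (simp add: sum.If_cases)
  finally show ?thesis .
qed

lemma ftest_alt: "ftest n a b s = (\<lambda>x. (x - pprime a b s) \<bullet> (x - pprime a b s)
   - real n / (real n - 1) * (\<Sum>k\<in>UNIV - {a, b}. x $ k * x $ k))"
  unfolding ftest_def power2_norm_eq_inner by (simp add: power2_eq_square)

lemma Wf_inner: "Wf n a b s x \<bullet> y = 2 * ((x - pprime a b s) \<bullet> y)
   - 2 * (real n / (real n - 1)) * (\<Sum>k\<in>UNIV - {a, b}. x $ k * y $ k)"
  unfolding Wf_def by (simp add: inner_diff_left Zv_inner)

lemma ftest_deriv: "(ftest n a b s has_derivative (\<lambda>y. Wf n a b s x \<bullet> y)) (at x)"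
proof -
  let ?p = "pprime a b s" and ?c = "real n / (real n - 1)" and ?Z = "UNIV - {a, b}"
  have "((\<lambda>x. (x - ?p) \<bullet> (x - ?p) - ?c * (\<Sum>k\<in>?Z. x $ k * x $ k)) has_derivative
     (\<lambda>y. (x - ?p) \<bullet> y + y \<bullet> (x - ?p) - ?c * (\<Sum>k\<in>?Z. x $ k * y $ k + y $ k * x $ k))) (at x)"
    by (intro has_derivative_diff has_derivative_inner has_derivative_mult_right has_derivative_sum
        has_derivative_mult bounded_linear.has_derivative[OF bounded_linear_vec_nth] has_derivative_ident
        has_derivative_const) (auto intro!: derivative_eq_intros)
  hence "((\<lambda>x. (x - ?p) \<bullet> (x - ?p) - ?c * (\<Sum>k\<in>?Z. x $ k * x $ k)) has_derivative
     (\<lambda>y. Wf n a b s x \<bullet> y)) (at x)"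
  proof (rule has_derivative_eq_rhs)
    show "(\<lambda>y. (x - ?p) \<bullet> y + y \<bullet> (x - ?p) - ?c * (\<Sum>k\<in>?Z. x $ k * y $ k + y $ k * x $ k)) = (\<lambda>y. Wf n a b s x \<bullet> y)"
    proof
      fix y
      have "(\<Sum>k\<in>?Z. x $ k * y $ k + y $ k * x $ k) = 2 * (\<Sum>k\<in>?Z. x $ k * y $ k)"
        by (simp add: sum.distrib mult.commute sum_distrib_left)
      moreover have "y \<bullet> (x - ?p) = (x - ?p) \<bullet> y" by (rule inner_commute)
      ultimately show "(x - ?p) \<bullet> y + y \<bullet> (x - ?p) - ?c * (\<Sum>k\<in>?Z. x $ k * y $ k + y $ k * x $ k) = Wf n a b s x \<bullet> y"
        unfolding Wf_inner by simp
    qed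
  qed
  thus ?thesis unfolding ftest_alt .
qed




lemma inv_entry:
  fixes A :: "real^'n::finite^'n"
  assumes inv: "invertible A"
  shows "matrix_inv A $ r $ c = det (\<chi> i j. if j = r then axis c 1 $ i else A$i$j) / det A"
proof -
  define x where "x = (\<chi> k. matrix_inv A $ k $ c)"
  have "A *v x = axis c 1"
  proof -
    have "(A *v x) $ i = (A ** matrix_inv A) $ i $ c" for i
      by (simp add: x_def matrix_vector_mult_def matrix_matrix_mult_def)
    thus ?thesis using invertible_inv(1)[OF inv] by (simp add: vec_eq_iff mat_def axis_def)
  qed
  hence "x = (\<chi> k. det(\<chi> i j. if j=k then (axis c 1 :: real^'n)$i else A$i$j) / det A)"
    using cramer[of A x "axis c 1"] inv invertible_det_nz by blast
  hence "x $ r = det(\<chi> i j. if j=r then (axis c 1 :: real^'n)$i else A$i$j) / det A" by simp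
  thus ?thesis by (simp add: x_def)
qed

lemma lb_nonneg:
  fixes \<phi> :: "real^'k::finite \<Rightarrow> real^'m::finite" and a b :: 'm
  assumes dim: "CARD('m) = CARD('k) + 1" and ab: "a \<noteq> b"
    and mi: "minimal_immersion_on U \<phi>" and u: "u \<in> U"
  shows "laplace_beltrami \<phi> (ftest CARD('k) a b s \<circ> \<phi>) u \<ge> 0"
proof -
  have oU: "open U" and sm: "smooth_on U \<phi>" and inj: "\<forall>v\<in>U. inj (frechet_derivative \<phi> (at v))"
    and H0: "mean_curvature_vec \<phi> u = 0"
    using mi u unfolding minimal_immersion_on_def immersion_on_def by auto
  have dpds: "pds is \<phi> differentiable at v" if "v \<in> U" for "is" v
    using sm that oU unfolding smooth_on_def by (meson differentiable_on_eq_differentiable_at)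
  have d0: "\<phi> differentiable at v" if "v \<in> U" for v using dpds[OF that, of "[]"] by simp
  have d1: "pd j \<phi> differentiable at v" if "v \<in> U" for j v using dpds[OF that, of "[j]"] by simp
  have d2: "pd i (pd j \<phi>) differentiable at v" if "v \<in> U" for i j v using dpds[OF that, of "[i,j]"] by simp
  have c2: "continuous_on U (pd i (pd j \<phi>))" for i j
    using d2 oU by (meson differentiable_imp_continuous_on differentiable_on_eq_differentiable_at)
  have Qsym: "pd i (pd j \<phi>) u = pd j (pd i \<phi>) u" for i j
    by (rule mixed_sym[OF oU u]) (use d0 d1 c2 in auto)
  define P where "P j = pd j \<phi> u" for j
  define Q where "Q i j = pd i (pd j \<phi>) u" for i j
  define g where "g = metric \<phi> u"
  define G where "G = matrix_inv g"
  define D where "D = det g"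
  define DP where "DP j = frechet_derivative (pd j \<phi>) (at u)" for j
  define dg where "dg d j k = DP j d \<bullet> P k + P j \<bullet> DP k d" for d j k
  have DPe: "DP j (axis i 1) = Q i j" for i j unfolding DP_def Q_def by (rule fd_axis)
  have dg_e: "dg (axis i 1) j k = Q i j \<bullet> P k + P j \<bullet> Q i k" for i j k
    unfolding dg_def DPe ..
  have invU: "invertible (metric \<phi> v)" if "v \<in> U" for v
    using metric_invertible d0 inj that by blast
  have ginv: "invertible g" unfolding g_def using invU u .
  have Gs: "G$i$j = G$j$i" for i j
    unfolding G_def using inv_sym[OF ginv] metric_sym unfolding g_def by blast
  have gP: "g$j$k = P j \<bullet> P k" for j k unfolding g_def metric_def P_def by simp
  have GI: "(\<Sum>i\<in>UNIV. G$j$i * (P i \<bullet> P l)) = (if j = l then 1 else 0)" for j l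
  proof -
    have "(G ** g) $ j $ l = (mat 1 :: real^'k^'k) $ j $ l" using invertible_inv(2)[OF ginv] G_def by simp
    thus ?thesis by (simp add: matrix_matrix_mult_def gP mat_def)
  qed
  have gG: "(\<Sum>b\<in>UNIV. g$e$b * G$b$c) = (if e = c then 1 else 0)" for e c
  proof -
    have "(g ** G) $ e $ c = (mat 1 :: real^'k^'k) $ e $ c" using invertible_inv(1)[OF ginv] G_def by simp
    thus ?thesis by (simp add: matrix_matrix_mult_def mat_def)
  qed
  have D0: "D \<noteq> 0" unfolding D_def using ginv invertible_det_nz by blast
  have gder: "((\<lambda>v. metric \<phi> v $ j $ k) has_derivative (\<lambda>d. dg d j k)) (at u)" for j k
  proof -
    have "((\<lambda>v. pd j \<phi> v \<bullet> pd k \<phi> v) has_derivative (\<lambda>d. pd j \<phi> u \<bullet> DP k d + DP j d \<bullet> pd k \<phi> u)) (at u)"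
      unfolding DP_def by (intro has_derivative_inner pd_works d1 u)
    thus ?thesis unfolding metric_def dg_def P_def by (simp add: add.commute)
  qed
  define Dd where "Dd d = (\<Sum>p\<in>{p. p permutes (UNIV::'k set)}. of_int (sign p) *
      (\<Sum>i\<in>UNIV. dg d i (p i) * (\<Prod>j\<in>UNIV-{i}. metric \<phi> u $ j $ p j)))" for d
  have Dder: "((\<lambda>v. det (metric \<phi> v)) has_derivative Dd) (at u)"
    unfolding Dd_def by (rule det_has_derivative[OF gder])
  have Dd_e: "Dd (axis i 1) = D * (\<Sum>a\<in>UNIV. \<Sum>b\<in>UNIV. dg (axis i 1) a b * G$b$a)" for i
    using jacobi_alg[OF ginv, of "\<chi> r c. dg (axis i 1) r c"]
    unfolding Dd_def D_def G_def g_def by simp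
  have Gdiff: "(\<lambda>v. matrix_inv (metric \<phi> v) $ r $ c) differentiable at u" for r c
  proof -
    define Nf where "Nf v = det ((\<chi> i j. if j = r then (axis c 1 :: real^'k) $ i else metric \<phi> v $ i $ j) :: real^'k^'k)" for v
    have ent: "((\<lambda>v. ((\<chi> i j. if j = r then (axis c 1 :: real^'k) $ i else metric \<phi> v $ i $ j) :: real^'k^'k) $ i $ j)
        has_derivative (if j = r then (\<lambda>d. 0) else (\<lambda>d. dg d i j))) (at u)" for i j
      using gder[of i j] by (cases "j = r") auto
    have "Nf differentiable at u"
      unfolding Nf_def differentiable_def using det_has_derivative[OF ent] by blast
    moreover have "(\<lambda>v. det (metric \<phi> v)) differentiable at u" using Dder differentiable_def by blast
    ultimately have "(\<lambda>v. Nf v / det (metric \<phi> v)) differentiable at u"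
      using D0 unfolding D_def g_def by (intro differentiable_divide) auto
    then obtain f' where f': "((\<lambda>v. Nf v / det (metric \<phi> v)) has_derivative f') (at u)"
      unfolding differentiable_def by blast
    have "((\<lambda>v. matrix_inv (metric \<phi> v) $ r $ c) has_derivative f') (at u)"
      by (rule has_derivative_transform_within_open[OF f' oU u])
        (simp add: Nf_def inv_entry[OF invU])
    thus ?thesis unfolding differentiable_def by blast
  qed
  define G' where "G' r c = frechet_derivative (\<lambda>v. matrix_inv (metric \<phi> v) $ r $ c) (at u)" for r c
  have Gder: "((\<lambda>v. matrix_inv (metric \<phi> v) $ r $ c) has_derivative G' r c) (at u)" for r c
    unfolding G'_def using Gdiff frechet_derivative_works by blast
  have G'0: "(\<Sum>b\<in>UNIV. G$a$b * dg d b c + G' a b d * g$b$c) = 0" for a c d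
  proof -
    have F1: "((\<lambda>v. \<Sum>b\<in>UNIV. matrix_inv (metric \<phi> v) $ a $ b * metric \<phi> v $ b $ c) has_derivative
        (\<lambda>d. \<Sum>b\<in>UNIV. G$a$b * dg d b c + G' a b d * g$b$c)) (at u)"
      unfolding G_def g_def by (intro has_derivative_sum has_derivative_mult Gder gder)
    have "((\<lambda>v. \<Sum>b\<in>UNIV. matrix_inv (metric \<phi> v) $ a $ b * metric \<phi> v $ b $ c) has_derivative (\<lambda>d. 0)) (at u)"
    proof (rule has_derivative_transform_within_open[OF _ oU u])
      show "((\<lambda>v. if a = c then 1 else 0) has_derivative (\<lambda>d. 0)) (at u)" by simp
      fix v assume "v \<in> U"
      have "(matrix_inv (metric \<phi> v) ** metric \<phi> v) $ a $ c = (mat 1 :: real^'k^'k) $ a $ c"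
        using invertible_inv(2)[OF invU[OF \<open>v \<in> U\<close>]] by simp
      thus "(if a = c then 1 else 0) = (\<Sum>b\<in>UNIV. matrix_inv (metric \<phi> v) $ a $ b * metric \<phi> v $ b $ c)"
        by (simp add: matrix_matrix_mult_def mat_def)
    qed
    from has_derivative_unique[OF F1 this] show ?thesis by meson
  qed
  have G'f: "G' a c d = - (\<Sum>e\<in>UNIV. \<Sum>b\<in>UNIV. G$a$e * dg d e b * G$b$c)" for a c d
  proof -
    have "G' a c d = (\<Sum>e\<in>UNIV. G' a e d * (if e = c then 1 else 0))"
      by (simp add: if_distrib cong: if_cong)
    also have "\<dots> = (\<Sum>e\<in>UNIV. \<Sum>b\<in>UNIV. G' a e d * g$e$b * G$b$c)"
      by (simp add: gG[symmetric] sum_distrib_left mult.assoc)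
    also have "\<dots> = (\<Sum>b\<in>UNIV. (\<Sum>e\<in>UNIV. G' a e d * g$e$b) * G$b$c)"
      by (subst sum.swap) (simp add: sum_distrib_right)
    also have "\<dots> = (\<Sum>b\<in>UNIV. (- (\<Sum>e\<in>UNIV. G$a$e * dg d e b)) * G$b$c)"
    proof (rule sum.cong[OF refl])
      fix b
      have "(\<Sum>e\<in>UNIV. G$a$e * dg d e b) + (\<Sum>e\<in>UNIV. G' a e d * g$e$b) = 0"
        using G'0[where a=a and c=b and d=d] by (simp add: sum.distrib)
      thus "(\<Sum>e\<in>UNIV. G' a e d * g$e$b) * G$b$c = (- (\<Sum>e\<in>UNIV. G$a$e * dg d e b)) * G$b$c"
        by (simp add: eq_neg_iff_add_eq_0 add.commute distrib_right[symmetric])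
    qed
    also have "\<dots> = - (\<Sum>e\<in>UNIV. \<Sum>b\<in>UNIV. G$a$e * dg d e b * G$b$c)"
      by (simp add: sum_distrib_right sum_negf) (subst sum.swap, simp)
    finally show ?thesis .
  qed
  define c where "c = real CARD('k) / (real CARD('k) - 1)"
  define Zs where "Zs = (UNIV::'m set) - {a, b}"
  define h where "h = ftest CARD('k) a b s \<circ> \<phi>"
  define W where "W x = Wf CARD('k) a b s x" for x
  define D\<phi> where "D\<phi> = frechet_derivative \<phi> (at u)"
  have Dphie: "D\<phi> (axis i 1) = P i" for i unfolding D\<phi>_def P_def by (rule fd_axis)
  have hpd: "pd j h v = W (\<phi> v) \<bullet> pd j \<phi> v" if "v \<in> U" for j v
  proof -
    have "(h has_derivative (\<lambda>y. W (\<phi> v) \<bullet> y) \<circ> frechet_derivative \<phi> (at v)) (at v)"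
      unfolding h_def W_def by (rule diff_chain_at[OF pd_works[OF d0[OF that]] ftest_deriv])
    from pd_eq[OF this, of j] show ?thesis by (simp add: fd_axis)
  qed
  have Wder: "((\<lambda>v. W (\<phi> v)) has_derivative (\<lambda>d. 2 *\<^sub>R D\<phi> d - (2 * c) *\<^sub>R Zv Zs (D\<phi> d))) (at u)"
  proof -
    have "((\<lambda>v. 2 *\<^sub>R (\<phi> v - pprime a b s) - (2 * c) *\<^sub>R Zv Zs (\<phi> v)) has_derivative
       (\<lambda>d. 2 *\<^sub>R (D\<phi> d - 0) - (2 * c) *\<^sub>R Zv Zs (D\<phi> d))) (at u)"
      unfolding D\<phi>_def
      by (intro has_derivative_diff has_derivative_scaleR_right pd_works d0 u has_derivative_const
          bounded_linear.has_derivative[OF Zv_bl])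
    thus ?thesis unfolding W_def Wf_def c_def Zs_def by simp
  qed
  define Hd where "Hd j d = W (\<phi> u) \<bullet> DP j d + (2 *\<^sub>R D\<phi> d - (2 * c) *\<^sub>R Zv Zs (D\<phi> d)) \<bullet> P j" for j d
  have Hder: "((\<lambda>v. pd j h v) has_derivative Hd j) (at u)" for j
  proof -
    have "((\<lambda>v. W (\<phi> v) \<bullet> pd j \<phi> v) has_derivative Hd j) (at u)"
      unfolding Hd_def DP_def P_def by (intro has_derivative_inner Wder pd_works d1 u)
    thus ?thesis by (rule has_derivative_transform_within_open[OF _ oU u]) (simp add: hpd)
  qed
  define w where "w j = W (\<phi> u) \<bullet> P j" for j
  have hu: "pd j h u = w j" for j unfolding w_def P_def using hpd[OF u] .
  define Yd where "Yd i d = sqrt (det (metric \<phi> u)) * (\<Sum>j\<in>UNIV. matrix_inv (metric \<phi> u) $ i $ j * Hd j d + G' i j d * pd j h u)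
      + sqrt (det (metric \<phi> u)) / (2 * det (metric \<phi> u)) * Dd d * (\<Sum>j\<in>UNIV. matrix_inv (metric \<phi> u) $ i $ j * pd j h u)" for i d
  have Yder: "((\<lambda>v. sqrt (det (metric \<phi> v)) * (\<Sum>j\<in>UNIV. inv_metric \<phi> v $ i $ j * pd j h v)) has_derivative Yd i) (at u)" for i
    unfolding Yd_def inv_metric_def
    by (intro has_derivative_mult sqrt_has_derivative[OF Dder] has_derivative_sum Gder Hder)
      (use D0 in \<open>simp add: D_def g_def\<close>)
  have LB: "laplace_beltrami \<phi> (ftest CARD('k) a b s \<circ> \<phi>) u = 1 / sqrt D * (\<Sum>i\<in>UNIV. Yd i (axis i 1))"
    unfolding laplace_beltrami_def h_def[symmetric] D_def g_def using pd_eq[OF Yder] by simp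
  define W0 where "W0 = W (\<phi> u)"
  define AP where "AP i = 2 *\<^sub>R P i - (2 * c) *\<^sub>R Zv Zs (P i)" for i
  have Hde: "Hd j (axis i 1) = W0 \<bullet> Q i j + AP i \<bullet> P j" for i j
    unfolding Hd_def W0_def AP_def by (simp add: DPe Dphie)
  have sD: "sqrt D \<noteq> 0" using D0 by simp
  define T where "T i = (1/2) * (\<Sum>a\<in>UNIV. \<Sum>b\<in>UNIV. (Q i a \<bullet> P b + P a \<bullet> Q i b) * G$b$a) * (\<Sum>l\<in>UNIV. G$i$l * w l)
        + (\<Sum>l\<in>UNIV. (- (\<Sum>a\<in>UNIV. \<Sum>b\<in>UNIV. G$i$a * (Q i a \<bullet> P b + P a \<bullet> Q i b) * G$b$l)) * w l)" for i
  define S where "S i = (\<Sum>j\<in>UNIV. G$i$j * (AP i \<bullet> P j)) + (\<Sum>j\<in>UNIV. G$i$j * (W0 \<bullet> Q i j))" for i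
  have per_i: "1 / sqrt D * Yd i (axis i 1) = T i + S i" for i
  proof -
    have Y: "Yd i (axis i 1) = sqrt D * ((\<Sum>j\<in>UNIV. G$i$j * (W0 \<bullet> Q i j + AP i \<bullet> P j))
        + (\<Sum>j\<in>UNIV. G' i j (axis i 1) * w j))
       + sqrt D / (2 * D) * (D * (\<Sum>a\<in>UNIV. \<Sum>b\<in>UNIV. dg (axis i 1) a b * G$b$a)) * (\<Sum>j\<in>UNIV. G$i$j * w j)"
      unfolding Yd_def Dd_e Hde hu G_def[symmetric] g_def[symmetric] D_def[symmetric]
      by (simp add: sum.distrib)
    have "1 / sqrt D * Yd i (axis i 1) = (\<Sum>j\<in>UNIV. G$i$j * (W0 \<bullet> Q i j + AP i \<bullet> P j))
        + (\<Sum>j\<in>UNIV. G' i j (axis i 1) * w j)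
        + (1/2) * (\<Sum>a\<in>UNIV. \<Sum>b\<in>UNIV. dg (axis i 1) a b * G$b$a) * (\<Sum>j\<in>UNIV. G$i$j * w j)"
      unfolding Y using sD D0 by (simp add: field_simps)
    also have "\<dots> = T i + S i"
      unfolding T_def S_def G'f dg_e by (simp add: distrib_left sum.distrib algebra_simps)
    finally show ?thesis .
  qed
  have LB2: "laplace_beltrami \<phi> (ftest CARD('k) a b s \<circ> \<phi>) u = (\<Sum>i\<in>UNIV. T i) + (\<Sum>i\<in>UNIV. S i)"
    unfolding LB sum_distrib_left per_i sum.distrib ..
  have Tsum: "(\<Sum>i\<in>UNIV. T i) = - (\<Sum>i\<in>UNIV. \<Sum>j\<in>UNIV. G$i$j * (\<Sum>k\<in>UNIV. \<Sum>l\<in>UNIV. G$k$l * ((Q i j \<bullet> P k) * w l)))"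
    unfolding T_def by (rule core_alg) (simp_all add: Q_def Qsym Gs)
  have WH: "W0 \<bullet> mean_curvature_vec \<phi> u = (\<Sum>i\<in>UNIV. \<Sum>j\<in>UNIV. G$i$j * (W0 \<bullet> Q i j))
      - (\<Sum>i\<in>UNIV. \<Sum>j\<in>UNIV. G$i$j * (\<Sum>k\<in>UNIV. \<Sum>l\<in>UNIV. G$k$l * ((Q i j \<bullet> P k) * w l)))"
    unfolding mean_curvature_vec_def tangent_proj_def inv_metric_def G_def[symmetric] g_def[symmetric]
      Q_def[symmetric] P_def[symmetric] w_def W0_def[symmetric]
    by (simp add: inner_sum_right inner_diff_right sum_subtractf right_diff_distrib inner_commute[of W0] mult.assoc)
  have "laplace_beltrami \<phi> (ftest CARD('k) a b s \<circ> \<phi>) u = (\<Sum>i\<in>UNIV. \<Sum>j\<in>UNIV. G$i$j * (AP i \<bullet> P j))"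
    using WH H0 unfolding LB2 Tsum S_def by (simp add: sum.distrib)
  also have "\<dots> \<ge> 0"
  proof -
    have cardZ: "card Zs + 1 = CARD('k)"
    proof -
      have "card Zs = CARD('m) - 2" unfolding Zs_def using ab by (simp add: card_Diff_subset)
      thus ?thesis using dim by simp
    qed
    show ?thesis
      using nonneg_alg[OF GI Gs cardZ]
      unfolding AP_def c_def Zv_def by simp
  qed
  finally show ?thesis .
qed



lemma closure_part:
  fixes \<Sigma> :: "(real^'m::finite) set" and a b :: 'm and x :: "real^'m"
  assumes ab: "a \<noteq> b" and s: "s > 0" and n2: "n \<ge> (2::nat)"
    and upper: "\<Sigma> \<subseteq> {x. x $ b > 0}"
    and hyp: "ball 0 s \<inter> \<Sigma> \<subseteq> {x. x $ a > 0}"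
    and x: "x \<in> closure (ball 0 s \<inter> \<Sigma>)" and nx: "norm x = s"
  shows "ftest n a b s x \<le> (2 - 1 / (real n - 1)) * s\<^sup>2"
proof -
  have cl: "closed ({x::real^'m. 0 \<le> x $ a} \<inter> {x. 0 \<le> x $ b})"
    by (intro closed_Int closed_Collect_le continuous_intros)
  have "ball 0 s \<inter> \<Sigma> \<subseteq> {x::real^'m. 0 \<le> x $ a} \<inter> {x. 0 \<le> x $ b}"
    using hyp upper by fastforce
  hence "closure (ball 0 s \<inter> \<Sigma>) \<subseteq> {x::real^'m. 0 \<le> x $ a} \<inter> {x. 0 \<le> x $ b}"
    using cl by (rule closure_minimal)
  hence xa0: "0 \<le> x $ a" and xb0: "0 \<le> x $ b" using x by auto
  have xas: "x $ a \<le> s" and xbs: "x $ b \<le> s"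
    using component_le_norm_cart[of x a] component_le_norm_cart[of x b] nx by auto
  define Z where "Z = (UNIV::'m set) - {a, b}"
  have nsq: "norm y ^ 2 = (\<Sum>k\<in>UNIV. (y$k)^2)" for y :: "real^'m"
    unfolding power2_norm_eq_inner inner_vec_def by (simp add: power2_eq_square)
  have split: "(\<Sum>k\<in>UNIV. f k) = (\<Sum>k\<in>Z. f k) + f a + (f b :: real)" for f
  proof -
    have "(\<Sum>k\<in>UNIV. f k) = (\<Sum>k\<in>UNIV - {a, b}. f k) + (\<Sum>k\<in>{a, b}. f k)"
      by (rule sum.subset_diff) auto
    thus ?thesis using ab unfolding Z_def by simp
  qed
  define Sz where "Sz = (\<Sum>k\<in>Z. (x$k)^2)"
  have p: "pprime a b s $ k = (if k = a \<or> k = b then s else 0)" for k by (simp add: pprime_def)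
  have f: "ftest n a b s x = Sz + (x$a - s)^2 + (x$b - s)^2 - real n / (real n - 1) * Sz"
  proof -
    have "norm (x - pprime a b s) ^ 2 = Sz + (x$a - s)^2 + (x$b - s)^2"
      unfolding nsq split Sz_def using ab by (simp add: p Z_def)
    thus ?thesis unfolding ftest_def Sz_def Z_def by simp
  qed
  have Szv: "Sz = s^2 - (x$a)^2 - (x$b)^2"
    using nsq[of x] unfolding split nx Sz_def by simp
  define c where "c = real n / (real n - 1)"
  have c1: "c \<le> 2" and c0: "c \<ge> 0" using n2 unfolding c_def by (auto simp: field_simps)
  have tgt: "2 - 1 / (real n - 1) = 3 - c" using n2 unfolding c_def by (simp add: field_simps)
  have ka: "0 \<le> x$a * (2 * s - c * x$a)"
    using xa0 xas c1 c0 by (intro mult_nonneg_nonneg) (auto intro: order_trans[OF mult_right_mono[OF c1 xa0]])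
  have kb: "0 \<le> x$b * (2 * s - c * x$b)"
    using xb0 xbs c1 c0 by (intro mult_nonneg_nonneg) (auto intro: order_trans[OF mult_right_mono[OF c1 xb0]])
  have "(3 - c) * s^2 - ftest n a b s x = x$a * (2 * s - c * x$a) + x$b * (2 * s - c * x$b)"
    unfolding f Szv c_def[symmetric] by (simp add: algebra_simps power2_eq_square)
  thus ?thesis unfolding tgt using ka kb by simp
qed


theorem lemma17:
  fixes \<phi> :: "'i \<Rightarrow> real^'k::finite \<Rightarrow> real^'m::finite"
    and U :: "'i \<Rightarrow> (real^'k) set"
    and a b :: 'm and s :: real
  assumes dim: "CARD('m) = CARD('k) + 1" and n2: "CARD('k) \<ge> 2"
    and ab: "a \<noteq> b" and s: "s > 0"
    and minimal: "\<forall>i. minimal_immersion_on (U i) (\<phi> i)"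
    and upper: "\<forall>i. \<forall>u\<in>U i. \<phi> i u $ b > 0"
  shows "(\<forall>i. \<forall>u\<in>U i. laplace_beltrami (\<phi> i) (ftest CARD('k) a b s \<circ> \<phi> i) u \<ge> 0)
       \<and> (ball 0 s \<inter> (\<Union>i. \<phi> i ` U i) \<subseteq> {x. x $ a > 0} \<longrightarrow>
           (\<forall>x\<in>closure (ball 0 s \<inter> (\<Union>i. \<phi> i ` U i)). norm x = s \<longrightarrow>
              ftest CARD('k) a b s x \<le> (2 - 1 / (real CARD('k) - 1)) * s\<^sup>2))"
proof -
  have part1: "\<forall>i. \<forall>u\<in>U i. laplace_beltrami (\<phi> i) (ftest CARD('k) a b s \<circ> \<phi> i) u \<ge> 0"
    using lb_nonneg[OF dim ab] minimal by blast
  have up: "(\<Union>i. \<phi> i ` U i) \<subseteq> {x. x $ b > 0}" using upper by auto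
  have part2: "ball 0 s \<inter> (\<Union>i. \<phi> i ` U i) \<subseteq> {x. x $ a > 0} \<longrightarrow>
           (\<forall>x\<in>closure (ball 0 s \<inter> (\<Union>i. \<phi> i ` U i)). norm x = s \<longrightarrow>
              ftest CARD('k) a b s x \<le> (2 - 1 / (real CARD('k) - 1)) * s\<^sup>2)"
    using closure_part[OF ab s n2 up] by blast
  show ?thesis using part1 part2 by blast
qed

end
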